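(* For all $\ell\in[n]$ and $r\in\{1,\dots,k\}$, $$\mathbb{E}[v(\mathrm{ALG}^{\ge\ell}_r)]\ \ge\ \frac{1}{\ell}\Big(\mathbb{E}[v(\mathcal{A}(U^{\le\ell}))]+(k-1)\,\mathbb{E}[v(\mathrm{ALG}^{\ge\ell+1}_{r-1})]+(\ell-k)\,\mathbb{E}[v(\mathrm{ALG}^{\ge\ell+1}_{r})]\Big).$$
   Context: Submodular secretary setting. Let $U$ be a finite ground set of $n$ items and $k\ge1$ an integer. Let $v\colon 2^U\to\mathbb{R}_{\ge0}$ be monotone and submodular. The items arrive one per round (rounds $1,\dots,n$) in a uniformly random order; for $\ell\in[n]$, $U^{\le \ell}$ denotes the set of items arriving in rounds $1,\dots,\ell$. $\mathcal{A}$ is an offline algorithm that, for every $L\subseteq U$, returns a set $\mathcal{A}(L)\subseteq L$ with $|\mathcal{A}(L)|\le k$ and $v(\mathcal{A}(L))\ge \alpha\max\{v(T):T\subseteq L,|T|\le k\}$, where $\alpha\in(0,1]$; $\mathcal{A}(L)$ depends only on the set $L$. Random sets $\mathrm{ALG}^{\ge\ell}_r\subseteq U$ for $\ell\in\{1,\dots,n+1\}$, $r\in\{0,\dots,k\}$ are defined recursively: $\mathrm{ALG}^{\ge\ell}_0=\emptyset$ for all $\ell$, $\mathrm{ALG}^{\ge n+1}_r=\emptyset$ for all $r$, and for $\ell\in[n]$, $r\ge1$, letting $j$ be the item arriving in round $\ell$: $\mathrm{ALG}^{\ge\ell}_r=\{j\}\cup\mathrm{ALG}^{\ge\ell+1}_{r-1}$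 if $j\in\mathcal{A}(U^{\le\ell})$, and $\mathrm{ALG}^{\ge\ell}_r=\mathrm{ALG}^{\ge\ell+1}_{r}$ otherwise. (Thus $\mathrm{ALG}^{\ge\ell}_r$ is the set of the first $r$ items a run of the selection rule "accept the arriving item if it lies in $\mathcal{A}(U^{\le\ell})$ and capacity remains" would accept if started in round $\ell$ with remaining capacity $r$.) *)

theory Defs
  imports "HOL-Probability.Probability" "HOL-Combinatorics.Multiset_Permutations"
begin

text \<open>An arrival order is a list xs enumerating U without repetition;
  the item arriving in round l (1 <= l <= n) is xs ! (l - 1), and the set of items
  arriving in rounds 1..l is set (take l xs).\<close>

text \<open>alg_aux A xs l m r: selection rule started in round l with capacity r,
  where m = number of remaining rounds (n + 1 - l).\<close>
fun alg_aux :: "('a set \<Rightarrow> 'a set) \<Rightarrow> 'a list \<Rightarrow> nat \<Rightarrow> nat \<Rightarrow> nat \<Rightarrow> 'a set" where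
  "alg_aux A xs l 0 r = {}"
| "alg_aux A xs l (Suc m) 0 = {}"
| "alg_aux A xs l (Suc m) (Suc r) =
     (if xs ! (l - 1) \<in> A (set (take l xs))
      then insert (xs ! (l - 1)) (alg_aux A xs (Suc l) m r)
      else alg_aux A xs (Suc l) m (Suc r))"

text \<open>ALG^{>= l}_r for the arrival order xs, for 1 <= l <= length xs + 1.\<close>
definition ALG :: "('a set \<Rightarrow> 'a set) \<Rightarrow> 'a list \<Rightarrow> nat \<Rightarrow> nat \<Rightarrow> 'a set" where
  "ALG A xs l r = alg_aux A xs l (length xs + 1 - l) r"

definition monotone_on_sets :: "'a set \<Rightarrow> ('a set \<Rightarrow> real) \<Rightarrow> bool" where
  "monotone_on_sets U v \<longleftrightarrow> (\<forall>S T. S \<subseteq> T \<and> T \<subseteq> U \<longrightarrow> v S \<le> v T)"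

definition submodular_on :: "'a set \<Rightarrow> ('a set \<Rightarrow> real) \<Rightarrow> bool" where
  "submodular_on U v \<longleftrightarrow> (\<forall>S T. S \<subseteq> U \<and> T \<subseteq> U \<longrightarrow> v (S \<union> T) + v (S \<inter> T) \<le> v S + v T)"

definition random_order :: "'a set \<Rightarrow> 'a list pmf" where
  "random_order U = pmf_of_set (permutations_of_set U)"

end

theory Submission
  imports Defs
begin

definition sw :: "nat \<Rightarrow> nat \<Rightarrow> 'a list \<Rightarrow> 'a list" where
  "sw i j xs = xs[i := xs!j, j := xs!i]"

lemma sw_length[simp]: "length (sw i j xs) = length xs"
  by (simp add: sw_def)

lemma sw_invol: "i < length xs \<Longrightarrow> j < length xs \<Longrightarrow> sw i j (sw i j xs) = xs"
  unfolding sw_def by (rule nth_equalityI) (auto simp: nth_list_update)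

lemma sw_perm: "xs \<in> permutations_of_set U \<Longrightarrow> i < length xs \<Longrightarrow> j < length xs
   \<Longrightarrow> sw i j xs \<in> permutations_of_set U"
  unfolding sw_def permutations_of_set_def by auto

lemma sw_take: "i < l \<Longrightarrow> j < l \<Longrightarrow> l \<le> length xs \<Longrightarrow>
   set (take l (sw i j xs)) = set (take l xs)"
proof -
  assume a: "i < l" "j < l" "l \<le> length xs"
  have "take l (sw i j xs) = (take l xs)[i := take l xs ! j, j := take l xs ! i]"
    using a by (simp add: sw_def take_update_swap)
  then show ?thesis using a set_swap[of i "take l xs" j] by simp
qed

lemma sw_drop: "i < l \<Longrightarrow> j < l \<Longrightarrow> drop l (sw i j xs) = drop l xs"
  by (simp add: sw_def)

lemma sw_nth: "i < length xs \<Longrightarrow> j < length xs \<Longrightarrow> sw i j xs ! j = xs ! i"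
  by (simp add: sw_def)

lemma alg_aux_cong:
  "length ys = length zs \<Longrightarrow> set (take p ys) = set (take p zs) \<Longrightarrow> drop p ys = drop p zs
   \<Longrightarrow> p < l \<Longrightarrow> l + m \<le> length ys + 1 \<Longrightarrow> alg_aux A ys l m r = alg_aux A zs l m r"
proof (induction m arbitrary: l r)
  case 0
  then show ?case by simp
next
  case (Suc m)
  have eqn: "ys ! (l - 1) = zs ! (l - 1)"
  proof -
    have e: "p + (l - 1 - p) = l - 1" using Suc.prems by simp
    have "drop p ys ! (l - 1 - p) = ys ! (p + (l - 1 - p))"
      by (rule nth_drop) (use Suc.prems in simp)
    moreover have "drop p zs ! (l - 1 - p) = zs ! (p + (l - 1 - p))"
      by (rule nth_drop) (use Suc.prems in simp)
    ultimately show ?thesis using Suc.prems e by simp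
  qed
  have eqs: "set (take l ys) = set (take l zs)"
  proof -
    have "take l ys = take p ys @ take (l - p) (drop p ys)"
      using take_add[of p "l - p" ys] Suc.prems by simp
    moreover have "take l zs = take p zs @ take (l - p) (drop p zs)"
      using take_add[of p "l - p" zs] Suc.prems by simp
    ultimately show ?thesis using Suc.prems by simp
  qed
  have IH: "\<And>r. alg_aux A ys (Suc l) m r = alg_aux A zs (Suc l) m r"
    using Suc.IH Suc.prems by simp
  have eqn': "ys ! (l - Suc 0) = zs ! (l - Suc 0)" using eqn by simp
  show ?case by (cases r) (simp_all add: eqn' eqs IH)
qed

lemma ALG_step:
  "1 \<le> l \<Longrightarrow> l \<le> length xs \<Longrightarrow> ALG A xs l (Suc r) =
    (if xs ! (l - 1) \<in> A (set (take l xs)) then insert (xs ! (l - 1)) (ALG A xs (l + 1) r)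
     else ALG A xs (l + 1) (Suc r))"
proof -
  assume a: "1 \<le> l" "l \<le> length xs"
  have "length xs + 1 - l = Suc (length xs - l)" using a by simp
  moreover have "length xs + 1 - (l + 1) = length xs - l" by simp
  ultimately show ?thesis unfolding ALG_def by simp
qed

lemma alg_aux_mono: "alg_aux A xs l m r \<subseteq> alg_aux A xs l m (Suc r)"
proof (induction m arbitrary: l r)
  case 0
  then show ?case by simp
next
  case (Suc m)
  then show ?case by (cases r) auto
qed

lemma alg_aux_sub: "set xs \<subseteq> U \<Longrightarrow> \<forall>L. L \<subseteq> U \<longrightarrow> A L \<subseteq> L \<Longrightarrow> alg_aux A xs l m r \<subseteq> U"
proof (induction m arbitrary: l r)
  case 0
  then show ?case by simp
next
  case (Suc m)
  have "set (take l xs) \<subseteq> U" using Suc.prems set_take_subset by fast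
  then have "A (set (take l xs)) \<subseteq> U" using Suc.prems by blast
  then show ?case using Suc by (cases r) auto
qed

lemma submod_sum:
  assumes fin: "finite B" and BU: "B \<subseteq> U" and SU: "S \<subseteq> U"
    and mono: "monotone_on_sets U v" and submod: "submodular_on U v"
  shows "(\<Sum>j\<in>B. v (insert j S)) \<ge> v (B \<union> S) + (real (card B) - 1) * v S"
  using fin BU
proof (induction B rule: finite_induct)
  case empty
  then show ?case by simp
next
  case (insert b B)
  have IH: "(\<Sum>j\<in>B. v (insert j S)) \<ge> v (B \<union> S) + (real (card B) - 1) * v S"
    using insert by simp
  have bU: "b \<in> U" using insert by simp
  have sm: "v (insert b S \<union> (B \<union> S)) + v (insert b S \<inter> (B \<union> S)) \<le> v (insert b S) + v (B \<union> S)"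
  proof -
    have "insert b S \<subseteq> U" "B \<union> S \<subseteq> U" using bU SU insert.prems by auto
    then show ?thesis using submod unfolding submodular_on_def by blast
  qed
  have mn: "v S \<le> v (insert b S \<inter> (B \<union> S))"
  proof -
    have "S \<subseteq> insert b S \<inter> (B \<union> S)" "insert b S \<inter> (B \<union> S) \<subseteq> U" using bU SU insert.prems by auto
    then show ?thesis using mono unfolding monotone_on_sets_def by blast
  qed
  have un: "insert b S \<union> (B \<union> S) = insert b B \<union> S" by auto
  have sm2: "v (insert b B \<union> S) + v (insert b S \<inter> (B \<union> S)) \<le> v (insert b S) + v (B \<union> S)"
    using sm by (simp only: un)
  have "(\<Sum>j\<in>insert b B. v (insert j S)) = v (insert b S) + (\<Sum>j\<in>B. v (insert j S))"
    using insert.hyps by simp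
  moreover have "real (card (insert b B)) = real (card B) + 1" using insert.hyps by simp
  ultimately show ?case using IH sm2 mn by (simp add: algebra_simps)
qed

lemma set_take_nth: "l \<le> length xs \<Longrightarrow> set (take l xs) = nth xs ` {..<l}"
proof -
  assume "l \<le> length xs"
  then have "take l xs = map (nth xs) [0..<l]"
    by (intro nth_equalityI) auto
  then show ?thesis by (simp add: atLeast0LessThan)
qed


lemma pointwise:
  assumes xs: "xs \<in> permutations_of_set U" and l: "1 \<le> l" "l \<le> length xs"
    and r: "1 \<le> r" "r \<le> k"
    and A_sub: "\<forall>L. L \<subseteq> U \<longrightarrow> A L \<subseteq> L \<and> card (A L) \<le> k"
    and mono: "monotone_on_sets U v" and submod: "submodular_on U v"
  shows "(\<Sum>i<l. v (ALG A (sw i (l - 1) xs) l r)) \<ge> v (A (set (take l xs)))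
     + (real k - 1) * v (ALG A xs (l + 1) (r - 1)) + (real l - real k) * v (ALG A xs (l + 1) r)"
proof -
  obtain r' where r': "r = Suc r'" using r by (cases r) auto
  define L where "L = set (take l xs)"
  define S' where "S' = ALG A xs (l + 1) r'"
  define S where "S = ALG A xs (l + 1) r"
  have dist: "distinct xs" and setU: "set xs = U" using xs by (auto dest: permutations_of_setD)
  have LU: "L \<subseteq> U" unfolding L_def using setU set_take_subset by fast
  have AL: "A L \<subseteq> L" "card (A L) \<le> k" using A_sub LU by auto
  have finL: "finite L" unfolding L_def by simp
  have cardL: "card L = l" unfolding L_def using dist l by (simp add: distinct_card)
  have A_sub': "\<forall>L. L \<subseteq> U \<longrightarrow> A L \<subseteq> L" using A_sub by blast
  have S'U: "S' \<subseteq> U" unfolding S'_def ALG_def using alg_aux_sub[OF _ A_sub'] setU by blast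
  have SU: "S \<subseteq> U" unfolding S_def ALG_def using alg_aux_sub[OF _ A_sub'] setU by blast
  have S'S: "S' \<subseteq> S" unfolding S'_def S_def ALG_def r' by (rule alg_aux_mono)
  define G where "G j = (if j \<in> A L then v (insert j S') else v S)" for j
  have each: "v (ALG A (sw i (l - 1) xs) l r) = G (xs ! i)" if i: "i < l" for i
  proof -
    define ys where "ys = sw i (l - 1) xs"
    have len: "length ys = length xs" unfolding ys_def by simp
    have tk: "set (take l ys) = L" unfolding ys_def L_def using i l by (intro sw_take) auto
    have dr: "drop l ys = drop l xs" unfolding ys_def using i l by (intro sw_drop) auto
    have nth: "ys ! (l - 1) = xs ! i" unfolding ys_def using i l by (intro sw_nth) auto
    have inv: "ALG A ys (l + 1) r0 = ALG A xs (l + 1) r0" for r0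
      unfolding ALG_def len
      by (rule alg_aux_cong) (use len tk dr l in \<open>auto simp: L_def\<close>)
    have "ALG A ys l r = (if xs ! i \<in> A L then insert (xs ! i) S' else S)"
      unfolding r' using ALG_step[of l ys A r'] l len tk nth inv
      by (simp add: S'_def S_def r')
    then show ?thesis unfolding ys_def G_def by simp
  qed
  have "(\<Sum>i<l. v (ALG A (sw i (l - 1) xs) l r)) = (\<Sum>i<l. G (xs ! i))"
    using each by simp
  also have "\<dots> = sum G L"
  proof -
    have "L = nth xs ` {..<l}" unfolding L_def using l set_take_nth by blast
    moreover have "inj_on (nth xs) {..<l}" using dist l by (intro inj_on_nth) auto
    ultimately show ?thesis by (simp add: sum.reindex)
  qed
  also have "\<dots> = (\<Sum>j\<in>A L. v (insert j S')) + (\<Sum>j\<in>L - A L. v S)"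
  proof -
    have "sum G L = (\<Sum>j\<in>L \<inter> {j. j \<in> A L}. v (insert j S')) + (\<Sum>j\<in>L \<inter> - {j. j \<in> A L}. v S)"
      unfolding G_def using finL by (rule sum.If_cases)
    moreover have "L \<inter> {j. j \<in> A L} = A L" using AL by auto
    moreover have "L \<inter> - {j. j \<in> A L} = L - A L" by auto
    ultimately show ?thesis by simp
  qed
  also have "\<dots> = (\<Sum>j\<in>A L. v (insert j S')) + (real l - real (card (A L))) * v S"
  proof -
    have "card (L - A L) = l - card (A L)" using AL finL cardL by (simp add: card_Diff_subset finite_subset)
    moreover have "card (A L) \<le> l" using AL finL cardL card_mono by metis
    ultimately show ?thesis by simp
  qed
  finally have eq: "(\<Sum>i<l. v (ALG A (sw i (l - 1) xs) l r)) =
     (\<Sum>j\<in>A L. v (insert j S')) + (real l - real (card (A L))) * v S" .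
  have finA: "finite (A L)" using AL finL finite_subset by blast
  have sb: "(\<Sum>j\<in>A L. v (insert j S')) \<ge> v (A L \<union> S') + (real (card (A L)) - 1) * v S'"
    using submod_sum[OF finA _ S'U mono submod] AL LU by blast
  have m1: "v (A L) \<le> v (A L \<union> S')" using mono AL LU S'U unfolding monotone_on_sets_def by blast
  have m2: "v S' \<le> v S" using mono S'S SU unfolding monotone_on_sets_def by blast
  have ak: "real (card (A L)) \<le> real k" using AL by simp
  have prod: "(real k - real (card (A L))) * (v S - v S') \<ge> 0" using ak m2 by simp
  have "v (A L) + (real k - 1) * v S' + (real l - real k) * v S
      \<le> (\<Sum>j\<in>A L. v (insert j S')) + (real l - real (card (A L))) * v S"
    using sb m1 prod by (simp add: algebra_simps)
  then show ?thesis using eq unfolding L_def S'_def S_def r' by simp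
qed

theorem mainTheorem3:
  fixes U :: "'a set" and k :: nat and v :: "'a set \<Rightarrow> real"
    and A :: "'a set \<Rightarrow> 'a set" and \<alpha> :: real and l r :: nat
  assumes finU: "finite U"
    and k: "k \<ge> 1"
    and nonneg: "\<forall>S. S \<subseteq> U \<longrightarrow> v S \<ge> 0"
    and mono: "monotone_on_sets U v"
    and submod: "submodular_on U v"
    and alpha: "0 < \<alpha>" "\<alpha> \<le> 1"
    and A_sub: "\<forall>L. L \<subseteq> U \<longrightarrow> A L \<subseteq> L \<and> card (A L) \<le> k"
    and A_approx: "\<forall>L. L \<subseteq> U \<longrightarrow>
        v (A L) \<ge> \<alpha> * Max {v T | T. T \<subseteq> L \<and> card T \<le> k}"
    and l: "1 \<le> l" "l \<le> card U"
    and r: "1 \<le> r" "r \<le> k"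
  shows "measure_pmf.expectation (random_order U) (\<lambda>xs. v (ALG A xs l r))
    \<ge> (1 / real l) *
       (measure_pmf.expectation (random_order U) (\<lambda>xs. v (A (set (take l xs))))
        + (real k - 1) * measure_pmf.expectation (random_order U) (\<lambda>xs. v (ALG A xs (l + 1) (r - 1)))
        + (real l - real k) * measure_pmf.expectation (random_order U) (\<lambda>xs. v (ALG A xs (l + 1) r)))"
proof -
  define P where "P = permutations_of_set U"
  have finP: "finite P" unfolding P_def by simp
  have neP: "P \<noteq> {}" unfolding P_def using finU by simp
  have lenP: "length xs = card U" if "xs \<in> P" for xs
    using that unfolding P_def by (rule length_finite_permutations_of_set)
  define f0 where "f0 xs = v (ALG A xs l r)" for xs
  define g1 where "g1 xs = v (A (set (take l xs)))" for xs
  define g2 where "g2 xs = v (ALG A xs (l + 1) (r - 1))" for xs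
  define g3 where "g3 xs = v (ALG A xs (l + 1) r)" for xs
  have E: "measure_pmf.expectation (random_order U) f = sum f P / real (card P)" for f :: "'a list \<Rightarrow> real"
    unfolding random_order_def P_def[symmetric] using finP neP by (simp add: integral_pmf_of_set)
  have shift: "sum f0 P = (\<Sum>xs\<in>P. f0 (sw i (l - 1) xs))" if i: "i < l" for i
  proof -
    have inv: "sw i (l - 1) (sw i (l - 1) a) = a \<and> sw i (l - 1) a \<in> P" if "a \<in> P" for a
      using that lenP[of a] i l unfolding P_def by (auto intro: sw_invol sw_perm)
    show ?thesis
      by (rule sum.reindex_bij_witness[where i = "sw i (l - 1)" and j = "sw i (l - 1)"])
         (use inv in auto)
  qed
  have "real l * sum f0 P = (\<Sum>i<l. sum f0 P)" by simp
  also have "\<dots> = (\<Sum>i<l. \<Sum>xs\<in>P. f0 (sw i (l - 1) xs))" using shift by simp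
  also have "\<dots> = (\<Sum>xs\<in>P. \<Sum>i<l. f0 (sw i (l - 1) xs))" by (rule sum.swap)
  also have "\<dots> \<ge> (\<Sum>xs\<in>P. g1 xs + (real k - 1) * g2 xs + (real l - real k) * g3 xs)"
  proof (rule sum_mono)
    fix xs assume xs: "xs \<in> P"
    have "\<forall>L. L \<subseteq> U \<longrightarrow> A L \<subseteq> L \<and> card (A L) \<le> k" using A_sub by blast
    then show "g1 xs + (real k - 1) * g2 xs + (real l - real k) * g3 xs \<le> (\<Sum>i<l. f0 (sw i (l - 1) xs))"
      using pointwise[of xs U l r k A v] xs lenP[OF xs] l r mono submod
      unfolding f0_def g1_def g2_def g3_def P_def by simp
  qed
  finally have key: "sum g1 P + (real k - 1) * sum g2 P + (real l - real k) * sum g3 P \<le> real l * sum f0 P"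
    by (simp add: sum.distrib sum_distrib_left)
  have Npos: "real (card P) > 0" using finP neP by (simp add: card_gt_0_iff)
  have lpos: "real l > 0" using l by simp
  have "(1 / real l) * (sum g1 P / real (card P) + (real k - 1) * (sum g2 P / real (card P))
      + (real l - real k) * (sum g3 P / real (card P)))
    = (sum g1 P + (real k - 1) * sum g2 P + (real l - real k) * sum g3 P) / (real l * real (card P))"
    using Npos lpos by (simp add: field_simps)
  also have "\<dots> \<le> (real l * sum f0 P) / (real l * real (card P))"
    using key Npos lpos by (intro divide_right_mono) auto
  also have "\<dots> = sum f0 P / real (card P)" using lpos by simp
  finally show ?thesis unfolding E f0_def g1_def g2_def g3_def by simp
qed

end
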